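(* Let $M$ be a $2^n\times2^n$ Hermitian matrix, let $k\le n$, and let $\varphi$ be a $2^k\times2^k$ density operator. Let $M_\varphi=\mathrm{Tr}_{n-k+1,\dots,n}\big[(I\otimes\varphi)M\big]$. Then for every $\varepsilon\in[0,1]$, $\deg_\varepsilon(M_\varphi)\le\deg_\varepsilon(M)$.
   Context: Pauli degree: with $P_\sigma=\bigotimes_iP_{\sigma_i}$, $P_0=I,P_1=X,P_2=Y,P_3=Z$, every $2^m\times2^m$ matrix is $A=\sum_\sigma\hat A(\sigma)P_\sigma$, $\deg(A)=\max\{|\{i:\sigma_i\ne0\}|:\hat A(\sigma)\ne0\}$, and $\deg_\varepsilon(A)=\min\{\deg(B):\|A-B\|\le\varepsilon\}$ with $\|\cdot\|$ the spectral norm. $\mathrm{Tr}_{n-k+1,\dots,n}$ is the partial trace over the last $k$ qubits. *)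

theory Defs
  imports Complex_Main "Jordan_Normal_Form.Matrix"
begin

definition kron :: "complex mat \<Rightarrow> complex mat \<Rightarrow> complex mat" where
  "kron A B = mat (dim_row A * dim_row B) (dim_col A * dim_col B)
     (\<lambda>(i,j). A $$ (i div dim_row B, j div dim_col B) * B $$ (i mod dim_row B, j mod dim_col B))"

(* single-qubit Pauli matrices: P0 = I, P1 = X, P2 = Y, P3 = Z *)
definition pauli :: "nat \<Rightarrow> complex mat" where
  "pauli s = (if s = 0 then mat_of_rows_list 2 [[1,0],[0,1]]
     else if s = 1 then mat_of_rows_list 2 [[0,1],[1,0]]
     else if s = 2 then mat_of_rows_list 2 [[0,-\<i>],[\<i>,0]]
     else mat_of_rows_list 2 [[1,0],[0,-1]])"

(* Pauli strings on m qubits: lists sigma of length m with entries in {0,1,2,3};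
   qubit 1 is the leftmost tensor factor, qubit m the rightmost *)
definition pauli_strings :: "nat \<Rightarrow> nat list set" where
  "pauli_strings m = {\<sigma>. length \<sigma> = m \<and> set \<sigma> \<subseteq> {0..<4}}"

definition pauli_op :: "nat list \<Rightarrow> complex mat" where
  "pauli_op \<sigma> = foldl (\<lambda>A s. kron A (pauli s)) (1\<^sub>m 1) \<sigma>"

definition weight :: "nat list \<Rightarrow> nat" where
  "weight \<sigma> = length (filter (\<lambda>s. s \<noteq> 0) \<sigma>)"

definition pauli_expansion :: "nat \<Rightarrow> complex mat \<Rightarrow> (nat list \<Rightarrow> complex) \<Rightarrow> bool" where
  "pauli_expansion m A c \<longleftrightarrow>
     A = mat (2^m) (2^m) (\<lambda>(i,j). \<Sum>\<sigma>\<in>pauli_strings m. c \<sigma> * pauli_op \<sigma> $$ (i,j))"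

definition pauli_deg :: "nat \<Rightarrow> complex mat \<Rightarrow> nat" where
  "pauli_deg m A = (LEAST d. \<exists>c. pauli_expansion m A c \<and>
      (\<forall>\<sigma>\<in>pauli_strings m. c \<sigma> \<noteq> 0 \<longrightarrow> weight \<sigma> \<le> d))"

definition vnorm :: "complex vec \<Rightarrow> real" where
  "vnorm v = sqrt (\<Sum>i<dim_vec v. (cmod (v $ i))\<^sup>2)"

definition spec_norm :: "complex mat \<Rightarrow> real" where
  "spec_norm A = Sup {vnorm (A *\<^sub>v v) | v. v \<in> carrier_vec (dim_col A) \<and> vnorm v \<le> 1}"

definition approx_deg :: "nat \<Rightarrow> real \<Rightarrow> complex mat \<Rightarrow> nat" where
  "approx_deg m \<epsilon> A = (LEAST d. \<exists>B \<in> carrier_mat (2^m) (2^m).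
      spec_norm (A - B) \<le> \<epsilon> \<and> pauli_deg m B = d)"

definition hermitian :: "complex mat \<Rightarrow> bool" where
  "hermitian A \<longleftrightarrow> dim_row A = dim_col A \<and>
     (\<forall>i<dim_row A. \<forall>j<dim_col A. A $$ (i,j) = cnj (A $$ (j,i)))"

definition density_op :: "nat \<Rightarrow> complex mat \<Rightarrow> bool" where
  "density_op k \<phi> \<longleftrightarrow> \<phi> \<in> carrier_mat (2^k) (2^k) \<and> hermitian \<phi> \<and>
     (\<forall>v \<in> carrier_vec (2^k). 0 \<le> Re (\<Sum>i<2^k. cnj (v $ i) * (\<phi> *\<^sub>v v) $ i)) \<and>
     (\<Sum>i<2^k. \<phi> $$ (i,i)) = 1"

definition ptrace_last :: "nat \<Rightarrow> nat \<Rightarrow> complex mat \<Rightarrow> complex mat" where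
  "ptrace_last n k A = mat (2^(n-k)) (2^(n-k))
     (\<lambda>(a,a'). \<Sum>b<2^k. A $$ (a * 2^k + b, a' * 2^k + b))"

end

theory Submission
  imports Defs "HOL-Analysis.L2_Norm"
begin


lemma sum_blocks: "(\<Sum>l<(N::nat)*K. f l) = (\<Sum>a<N. \<Sum>c<K. f (a*K+c))"
proof -
  have "(\<Sum>l<N*K. f l) = (\<Sum>a<N. sum f {a*K..<a*K+K})"
    using sum.nat_group[where g=f and k=K and n=N] by simp
  also have "\<dots> = (\<Sum>a<N. \<Sum>c<K. f (a*K+c))"
  proof (rule sum.cong[OF refl])
    fix a
    show "sum f {a*K..<a*K+K} = (\<Sum>c<K. f (a*K+c))"
      using sum.shift_bounds_nat_ivl[where g=f and m=0 and k="a*K" and n=K] by (simp add: lessThan_atLeast0 add.commute)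
  qed
  finally show ?thesis .
qed

lemma kron_dims[simp]: "dim_row (kron A B) = dim_row A * dim_row B" "dim_col (kron A B) = dim_col A * dim_col B"
  by (simp_all add: kron_def)

lemma kron_index: "i < dim_row A * dim_row B \<Longrightarrow> j < dim_col A * dim_col B \<Longrightarrow>
  kron A B $$ (i,j) = A $$ (i div dim_row B, j div dim_col B) * B $$ (i mod dim_row B, j mod dim_col B)"
  by (simp add: kron_def)

lemma mrl_dims[simp]: "dim_row (mat_of_rows_list nc rs) = length rs" "dim_col (mat_of_rows_list nc rs) = nc"
  by (simp_all add: mat_of_rows_list_def)
lemma mrl_index[simp]: "i < length rs \<Longrightarrow> j < nc \<Longrightarrow> mat_of_rows_list nc rs $$ (i,j) = rs ! i ! j"
  by (simp add: mat_of_rows_list_def)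
lemma pauli_carrier: "pauli s \<in> carrier_mat 2 2"
  unfolding pauli_def carrier_mat_def by simp

lemma pauli_op_snoc: "pauli_op (\<sigma> @ [s]) = kron (pauli_op \<sigma>) (pauli s)"
  by (simp add: pauli_op_def)

lemma pauli_op_carrier: "pauli_op \<sigma> \<in> carrier_mat (2^length \<sigma>) (2^length \<sigma>)"
proof (induction \<sigma> rule: rev_induct)
  case Nil thus ?case by (simp add: pauli_op_def)
next
  case (snoc s \<sigma>)
  have d: "dim_row (pauli s) = 2" "dim_col (pauli s) = 2" using pauli_carrier[of s] by auto
  have e: "dim_row (pauli_op \<sigma>) = 2^length \<sigma>" "dim_col (pauli_op \<sigma>) = 2^length \<sigma>" using snoc.IH by auto
  show ?case unfolding pauli_op_snoc by (rule carrier_matI) (simp_all only: kron_dims d e length_append_singleton power_Suc mult.commute)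
qed

lemma pauli_op_dims[simp]: "dim_row (pauli_op \<sigma>) = 2^length \<sigma>" "dim_col (pauli_op \<sigma>) = 2^length \<sigma>"
  using pauli_op_carrier[of \<sigma>] by auto

lemma pauli_op_append:
  assumes "i < 2^(length \<tau> + length \<rho>)" "j < 2^(length \<tau> + length \<rho>)"
  shows "pauli_op (\<tau> @ \<rho>) $$ (i,j) = pauli_op \<tau> $$ (i div 2^length \<rho>, j div 2^length \<rho>)
      * pauli_op \<rho> $$ (i mod 2^length \<rho>, j mod 2^length \<rho>)"
  using assms
proof (induction \<rho> arbitrary: i j rule: rev_induct)
  case Nil thus ?case by (simp add: pauli_op_def)
next
  case (snoc s \<rho>)
  let ?r = "length \<rho>"
  have p2: "dim_row (pauli s) = 2" "dim_col (pauli s) = 2" using pauli_carrier[of s] by auto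
  have ij: "i < 2^(length \<tau> + ?r) * 2" "j < 2^(length \<tau> + ?r) * 2" using snoc.prems by (auto simp: power_add)
  have "pauli_op (\<tau> @ \<rho> @ [s]) $$ (i,j) = pauli_op (\<tau> @ \<rho>) $$ (i div 2, j div 2) * pauli s $$ (i mod 2, j mod 2)"
    using ij by (simp add: pauli_op_snoc[of "\<tau> @ \<rho>", simplified] kron_index p2 power_add)
  also have "pauli_op (\<tau> @ \<rho>) $$ (i div 2, j div 2) = pauli_op \<tau> $$ (i div 2 div 2^?r, j div 2 div 2^?r)
      * pauli_op \<rho> $$ (i div 2 mod 2^?r, j div 2 mod 2^?r)"
    by (rule snoc.IH) (use ij in \<open>auto simp: less_mult_imp_div_less\<close>)
  also have "pauli_op (\<rho> @ [s]) $$ (i mod 2^Suc ?r, j mod 2^Suc ?r) = pauli_op \<rho> $$ (i mod 2^Suc ?r div 2, j mod 2^Suc ?r div 2) * pauli s $$ (i mod 2^Suc ?r mod 2, j mod 2^Suc ?r mod 2)"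
    by (simp add: pauli_op_snoc kron_index p2 mult.commute)
  moreover have "i mod 2^Suc ?r div 2 = i div 2 mod 2^?r" "j mod 2^Suc ?r div 2 = j div 2 mod 2^?r"
    by (simp_all add: mod_mult2_eq div_mult2_eq mult.commute)
  moreover have "i mod 2^Suc ?r mod 2 = i mod 2" "j mod 2^Suc ?r mod 2 = j mod 2"
    by (simp_all add: mod_mod_cancel)
  moreover have "i div 2 div 2^?r = i div 2^Suc ?r" "j div 2 div 2^?r = j div 2^Suc ?r"
    by (simp_all add: div_mult2_eq)
  ultimately show ?case by simp
qed

lemma finite_strings[simp]: "finite (pauli_strings m)"
proof -
  have "pauli_strings m = {xs. set xs \<subseteq> {0..<4} \<and> length xs = m}"
    by (auto simp: pauli_strings_def)
  thus ?thesis using finite_lists_length_eq[of "{0..<4::nat}" m] by simp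
qed

lemma strings_append_image: "pauli_strings (p+q) = (\<lambda>(\<tau>,\<rho>). \<tau> @ \<rho>) ` (pauli_strings p \<times> pauli_strings q)"
proof (rule Set.set_eqI)
  fix \<sigma>
  show "\<sigma> \<in> pauli_strings (p+q) \<longleftrightarrow> \<sigma> \<in> (\<lambda>(\<tau>,\<rho>). \<tau> @ \<rho>) ` (pauli_strings p \<times> pauli_strings q)"
  proof
    assume a: "\<sigma> \<in> pauli_strings (p+q)"
    have "\<sigma> = take p \<sigma> @ drop p \<sigma>" by simp
    moreover have "take p \<sigma> \<in> pauli_strings p" "drop p \<sigma> \<in> pauli_strings q"
      using a set_take_subset[of p \<sigma>] set_drop_subset[of p \<sigma>] by (auto simp: pauli_strings_def)
    ultimately show "\<sigma> \<in> (\<lambda>(\<tau>,\<rho>). \<tau> @ \<rho>) ` (pauli_strings p \<times> pauli_strings q)"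
      by (metis (no_types, lifting) SigmaI case_prod_conv image_eqI)
  next
    assume "\<sigma> \<in> (\<lambda>(\<tau>,\<rho>). \<tau> @ \<rho>) ` (pauli_strings p \<times> pauli_strings q)"
    then obtain \<tau> \<rho> where "\<sigma> = \<tau> @ \<rho>" "\<tau> \<in> pauli_strings p" "\<rho> \<in> pauli_strings q" by auto
    thus "\<sigma> \<in> pauli_strings (p+q)" by (auto simp: pauli_strings_def)
  qed
qed

lemma strings_append_inj: "inj_on (\<lambda>(\<tau>,\<rho>). \<tau> @ \<rho>) (pauli_strings p \<times> pauli_strings q)"
  by (auto simp: inj_on_def pauli_strings_def)

lemma sum_strings_append:
  "(\<Sum>\<sigma>\<in>pauli_strings (p+q). f \<sigma>) = (\<Sum>\<tau>\<in>pauli_strings p. \<Sum>\<rho>\<in>pauli_strings q. f (\<tau> @ \<rho>))"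
proof -
  have "(\<Sum>\<sigma>\<in>pauli_strings (p+q). f \<sigma>) = (\<Sum>x\<in>pauli_strings p \<times> pauli_strings q. f (fst x @ snd x))"
    unfolding strings_append_image
    by (subst sum.reindex[OF strings_append_inj]) (simp add: case_prod_beta)
  also have "\<dots> = (\<Sum>\<tau>\<in>pauli_strings p. \<Sum>\<rho>\<in>pauli_strings q. f (\<tau> @ \<rho>))"
    unfolding sum.cartesian_product by (simp add: case_prod_beta)
  finally show ?thesis .
qed

lemma strings_one: "pauli_strings 1 = (\<lambda>s. [s]) ` {..<4}"
  apply (auto simp: pauli_strings_def image_iff)
  subgoal for x by (cases x) auto
  done

lemma sum_strings_one: "(\<Sum>\<rho>\<in>pauli_strings 1. f \<rho>) = (\<Sum>s<4. f [s])"
  unfolding strings_one by (subst sum.reindex) (auto simp: inj_on_def)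

lemma sum4: "(\<Sum>s<(4::nat). f s) = f 0 + f 1 + f 2 + f 3"
  by (simp add: eval_nat_numeral)

lemma less2: "(x::nat) < 2 \<Longrightarrow> x = 0 \<or> x = 1" by auto

lemma pauli_complete1:
  assumes "x < 2" "y < 2" "x' < 2" "y' < 2"
  shows "(\<Sum>s<4. pauli s $$ (x,y) * cnj (pauli s $$ (x',y'))) = (if x = x' \<and> y = y' then 2 else 0)"
  using less2[OF assms(1)] less2[OF assms(2)] less2[OF assms(3)] less2[OF assms(4)]
  by (auto simp: sum4 pauli_def)

lemma pauli_op_single: "x < 2 \<Longrightarrow> y < 2 \<Longrightarrow> pauli_op [s] $$ (x,y) = pauli s $$ (x,y)"
  using pauli_op_snoc[of "[]" s] pauli_carrier[of s] by (simp add: kron_index pauli_op_def)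

lemma dm_eq: "((a::nat) = b) \<longleftrightarrow> (a div 2 = b div 2 \<and> a mod 2 = b mod 2)"
  by (metis div_mult_mod_eq)

lemma pauli_complete:
  assumes "i < 2^m" "j < 2^m" "i' < 2^m" "j' < 2^m"
  shows "(\<Sum>\<sigma>\<in>pauli_strings m. pauli_op \<sigma> $$ (i,j) * cnj (pauli_op \<sigma> $$ (i',j')))
     = (if i = i' \<and> j = j' then 2^m else 0)"
  using assms
proof (induction m arbitrary: i j i' j')
  case 0
  hence "i = 0" "j = 0" "i' = 0" "j' = 0" by auto
  moreover have "pauli_strings 0 = {[]}" by (auto simp: pauli_strings_def)
  ultimately show ?case by (simp add: pauli_op_def)
next
  case (Suc m)
  have str: "length \<tau> = m \<Longrightarrow> length [s] = 1" for \<tau> :: "nat list" and s by simp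
  have e: "pauli_op (\<tau> @ [s]) $$ (a,b) = pauli_op \<tau> $$ (a div 2, b div 2) * pauli s $$ (a mod 2, b mod 2)"
    if "\<tau> \<in> pauli_strings m" "a < 2^Suc m" "b < 2^Suc m" for \<tau> s a b
    using pauli_op_append[of a \<tau> "[s]" b] that by (simp add: pauli_strings_def pauli_op_single)
  have "(\<Sum>\<sigma>\<in>pauli_strings (Suc m). pauli_op \<sigma> $$ (i,j) * cnj (pauli_op \<sigma> $$ (i',j')))
     = (\<Sum>\<tau>\<in>pauli_strings m. \<Sum>s<4. pauli_op (\<tau> @ [s]) $$ (i,j) * cnj (pauli_op (\<tau> @ [s]) $$ (i',j')))"
    by (simp only: Suc_eq_plus1 sum_strings_append sum_strings_one)
  also have "\<dots> = (\<Sum>\<tau>\<in>pauli_strings m. \<Sum>s<4. (pauli_op \<tau> $$ (i div 2, j div 2) * cnj (pauli_op \<tau> $$ (i' div 2, j' div 2)))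
        * (pauli s $$ (i mod 2, j mod 2) * cnj (pauli s $$ (i' mod 2, j' mod 2))))"
  proof (intro sum.cong refl)
    fix \<tau> s assume t: "\<tau> \<in> pauli_strings m"
    show "pauli_op (\<tau> @ [s]) $$ (i,j) * cnj (pauli_op (\<tau> @ [s]) $$ (i',j')) = (pauli_op \<tau> $$ (i div 2, j div 2) * cnj (pauli_op \<tau> $$ (i' div 2, j' div 2)))
        * (pauli s $$ (i mod 2, j mod 2) * cnj (pauli s $$ (i' mod 2, j' mod 2)))"
      using e[OF t Suc.prems(1,2), of s] e[OF t Suc.prems(3,4), of s] by (simp add: mult_ac)
  qed
  also have "\<dots> = (\<Sum>\<tau>\<in>pauli_strings m. pauli_op \<tau> $$ (i div 2, j div 2) * cnj (pauli_op \<tau> $$ (i' div 2, j' div 2)))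
        * (\<Sum>s<4. pauli s $$ (i mod 2, j mod 2) * cnj (pauli s $$ (i' mod 2, j' mod 2)))"
    by (simp add: sum_product)
  also have "\<dots> = (if i div 2 = i' div 2 \<and> j div 2 = j' div 2 then 2^m else 0) * (if i mod 2 = i' mod 2 \<and> j mod 2 = j' mod 2 then 2 else 0)"
    using Suc.prems by (subst Suc.IH) (auto simp: less_mult_imp_div_less pauli_complete1)
  also have "\<dots> = (if (i div 2 = i' div 2 \<and> i mod 2 = i' mod 2) \<and> (j div 2 = j' div 2 \<and> j mod 2 = j' mod 2) then 2^Suc m else 0)"
    by auto
  also have "\<dots> = (if i = i' \<and> j = j' then 2^Suc m else 0)"
    by (simp only: dm_eq[symmetric])
  finally show ?case .
qed


lemma sum_delta2: "i < N \<Longrightarrow> j < M \<Longrightarrow> (\<Sum>i'<(N::nat). \<Sum>j'<(M::nat). if i' = i \<and> j' = j then x else 0) = x"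
proof -
  assume "i < N" "j < M"
  have "(\<Sum>i'<N. \<Sum>j'<M. if i' = i \<and> j' = j then x else 0) = (\<Sum>i'<N. if i' = i then x else 0)"
    by (rule sum.cong[OF refl]) (use \<open>j < M\<close> in auto)
  also have "\<dots> = x" using \<open>i < N\<close> by simp
  finally show ?thesis .
qed

lemma pauli_expansion_exists:
  assumes A: "A \<in> carrier_mat (2^m) (2^m)"
  shows "\<exists>c. pauli_expansion m A c"
proof -
  define c where "c \<sigma> = (\<Sum>i'<2^m. \<Sum>j'<2^m. cnj (pauli_op \<sigma> $$ (i',j')) * A $$ (i',j')) / 2^m" for \<sigma>
  have "A = mat (2^m) (2^m) (\<lambda>(i,j). \<Sum>\<sigma>\<in>pauli_strings m. c \<sigma> * pauli_op \<sigma> $$ (i,j))"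
  proof (rule eq_matI)
    fix i j assume i: "i < dim_row (mat (2^m) (2^m) (\<lambda>(i,j). \<Sum>\<sigma>\<in>pauli_strings m. c \<sigma> * pauli_op \<sigma> $$ (i,j)))"
      and j: "j < dim_col (mat (2^m) (2^m) (\<lambda>(i,j). \<Sum>\<sigma>\<in>pauli_strings m. c \<sigma> * pauli_op \<sigma> $$ (i,j)))"
    hence i: "i < 2^m" and j: "j < 2^m" by auto
    have "(\<Sum>\<sigma>\<in>pauli_strings m. c \<sigma> * pauli_op \<sigma> $$ (i,j))
      = (\<Sum>\<sigma>\<in>pauli_strings m. \<Sum>i'<2^m. \<Sum>j'<2^m. A $$ (i',j') / 2^m * (pauli_op \<sigma> $$ (i,j) * cnj (pauli_op \<sigma> $$ (i',j'))))"
    proof (rule sum.cong[OF refl])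
      fix \<sigma>
      have "c \<sigma> * pauli_op \<sigma> $$ (i,j) = (\<Sum>i'<2^m. \<Sum>j'<2^m. cnj (pauli_op \<sigma> $$ (i',j')) * A $$ (i',j') / 2^m * pauli_op \<sigma> $$ (i,j))"
        unfolding c_def by (simp only: sum_divide_distrib sum_distrib_right)
      also have "\<dots> = (\<Sum>i'<2^m. \<Sum>j'<2^m. A $$ (i',j') / 2^m * (pauli_op \<sigma> $$ (i,j) * cnj (pauli_op \<sigma> $$ (i',j'))))"
        by (intro sum.cong refl) (simp add: divide_inverse mult_ac)
      finally show "c \<sigma> * pauli_op \<sigma> $$ (i,j) = (\<Sum>i'<2^m. \<Sum>j'<2^m. A $$ (i',j') / 2^m * (pauli_op \<sigma> $$ (i,j) * cnj (pauli_op \<sigma> $$ (i',j'))))" .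
    qed
    also have "\<dots> = (\<Sum>i'<2^m. \<Sum>\<sigma>\<in>pauli_strings m. \<Sum>j'<2^m. A $$ (i',j') / 2^m * (pauli_op \<sigma> $$ (i,j) * cnj (pauli_op \<sigma> $$ (i',j'))))"
      by (rule sum.swap)
    also have "\<dots> = (\<Sum>i'<2^m. \<Sum>j'<2^m. \<Sum>\<sigma>\<in>pauli_strings m. A $$ (i',j') / 2^m * (pauli_op \<sigma> $$ (i,j) * cnj (pauli_op \<sigma> $$ (i',j'))))"
      by (rule sum.cong[OF refl], rule sum.swap)
    also have "\<dots> = (\<Sum>i'<2^m. \<Sum>j'<2^m. A $$ (i',j') / 2^m * (\<Sum>\<sigma>\<in>pauli_strings m. pauli_op \<sigma> $$ (i,j) * cnj (pauli_op \<sigma> $$ (i',j'))))"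
      by (simp only: sum_distrib_left)
    also have "\<dots> = (\<Sum>i'<2^m. \<Sum>j'<2^m. if i' = i \<and> j' = j then A $$ (i,j) else 0)"
      by (intro sum.cong refl) (auto simp: pauli_complete i j)
    also have "\<dots> = A $$ (i,j)"
      using i j by (rule sum_delta2)
    finally show "A $$ (i,j) = mat (2^m) (2^m) (\<lambda>(i,j). \<Sum>\<sigma>\<in>pauli_strings m. c \<sigma> * pauli_op \<sigma> $$ (i,j)) $$ (i,j)"
      using i j by simp
  qed (use A in auto)
  thus ?thesis unfolding pauli_expansion_def by blast
qed


lemma blk_div[simp]: "c < (K::nat) \<Longrightarrow> (a*K+c) div K = a" by simp
lemma blk_mod[simp]: "c < (K::nat) \<Longrightarrow> (a*K+c) mod K = c" by simp
lemma blk_less: "a < (N::nat) \<Longrightarrow> c < K \<Longrightarrow> a*K+c < N*K"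
proof -
  assume "a < N" "c < K"
  hence "a*K + c < a*K + K" by simp
  also have "\<dots> = (a+1)*K" by simp
  also have "\<dots> \<le> N*K" using \<open>a < N\<close> by (intro mult_right_mono) auto
  finally show ?thesis .
qed

lemma ptrace_entry:
  assumes A: "A \<in> carrier_mat (N*K) (N*K)" and phi: "\<phi> \<in> carrier_mat K K"
    and NK: "2^(n-k) = N" "2^k = K" "2^n = N*K" and a: "a < N" "a' < N"
  shows "ptrace_last n k (kron (1\<^sub>m N) \<phi> * A) $$ (a,a') = (\<Sum>b<K. \<Sum>c<K. \<phi> $$ (b,c) * A $$ (a*K+c, a'*K+b))"
proof -
  have dX: "dim_row (kron (1\<^sub>m N) \<phi>) = N*K" "dim_col (kron (1\<^sub>m N) \<phi>) = N*K" using phi by auto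
  have Xe: "kron (1\<^sub>m N) \<phi> $$ (a*K+b, x*K+c) = (if a = x then \<phi> $$ (b,c) else 0)"
    if "b < K" "x < N" "c < K" for b x c
  proof -
    have "kron (1\<^sub>m N) \<phi> $$ (a*K+b, x*K+c) = 1\<^sub>m N $$ (a, x) * \<phi> $$ (b,c)"
      using that a phi blk_less[OF a(1) that(1)] blk_less[OF that(2) that(3)] by (simp add: kron_index)
    thus ?thesis using a that by simp
  qed
  have prod: "(kron (1\<^sub>m N) \<phi> * A) $$ (a*K+b, j) = (\<Sum>c<K. \<phi> $$ (b,c) * A $$ (a*K+c, j))"
    if "b < K" "j < N*K" for b j
  proof -
    have "(kron (1\<^sub>m N) \<phi> * A) $$ (a*K+b, j) = (\<Sum>l<N*K. kron (1\<^sub>m N) \<phi> $$ (a*K+b, l) * A $$ (l, j))"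
    proof -
      have i: "a*K+b < N*K" using blk_less[OF a(1) that(1)] .
      have "(kron (1\<^sub>m N) \<phi> * A) $$ (a*K+b, j) = row (kron (1\<^sub>m N) \<phi>) (a*K+b) \<bullet> col A j"
        using i that A dX by (subst index_mult_mat) auto
      also have "\<dots> = (\<Sum>l\<in>{0..<N*K}. row (kron (1\<^sub>m N) \<phi>) (a*K+b) $ l * col A j $ l)"
        using A by (simp add: scalar_prod_def)
      also have "\<dots> = (\<Sum>l<N*K. kron (1\<^sub>m N) \<phi> $$ (a*K+b, l) * A $$ (l, j))"
        unfolding lessThan_atLeast0 using A dX i that by (intro sum.cong refl) auto
      finally show ?thesis .
    qed
    also have "\<dots> = (\<Sum>x<N. \<Sum>c<K. kron (1\<^sub>m N) \<phi> $$ (a*K+b, x*K+c) * A $$ (x*K+c, j))"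
      by (rule sum_blocks)
    also have "\<dots> = (\<Sum>x<N. \<Sum>c<K. if a = x then \<phi> $$ (b,c) * A $$ (x*K+c, j) else 0)"
      using that by (intro sum.cong refl) (simp add: Xe)
    also have "\<dots> = (\<Sum>c<K. \<phi> $$ (b,c) * A $$ (a*K+c, j))"
    proof -
      have "(\<Sum>x<N. \<Sum>c<K. if a = x then \<phi> $$ (b,c) * A $$ (x*K+c, j) else 0) = (\<Sum>x<N. if x = a then (\<Sum>c<K. \<phi> $$ (b,c) * A $$ (x*K+c, j)) else 0)"
        by (intro sum.cong refl) auto
      also have "\<dots> = (\<Sum>c<K. \<phi> $$ (b,c) * A $$ (a*K+c, j))" using a by simp
      finally show ?thesis .
    qed
    finally show ?thesis .
  qed
  show ?thesis
    unfolding ptrace_last_def using a NK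
    by (simp add: prod blk_less)
qed


lemma expansion_entry:
  assumes "pauli_expansion m B c" "i < 2^m" "j < 2^m"
  shows "B $$ (i,j) = (\<Sum>\<sigma>\<in>pauli_strings m. c \<sigma> * pauli_op \<sigma> $$ (i,j))"
  using assms unfolding pauli_expansion_def by (metis (no_types, lifting) index_mat(1) old.prod.case)

lemma weight_append: "weight \<tau> \<le> weight (\<tau> @ \<rho>)"
  by (simp add: weight_def)

lemma ptrace_deg:
  assumes B: "B \<in> carrier_mat (N*K) (N*K)" and phi: "\<phi> \<in> carrier_mat K K"
    and NK: "2^(n-k) = N" "2^k = K" "2^n = N*K" "k \<le> n"
    and exp: "pauli_expansion n B co" and wt: "\<forall>\<sigma>\<in>pauli_strings n. co \<sigma> \<noteq> 0 \<longrightarrow> weight \<sigma> \<le> d"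
  shows "pauli_deg (n-k) (ptrace_last n k (kron (1\<^sub>m N) \<phi> * B)) \<le> d"
proof -
  define t where "t \<rho> = (\<Sum>b<K. \<Sum>c<K. \<phi> $$ (b,c) * pauli_op \<rho> $$ (c,b))" for \<rho>
  define c' where "c' \<tau> = (\<Sum>\<rho>\<in>pauli_strings k. co (\<tau> @ \<rho>) * t \<rho>)" for \<tau>
  let ?X = "ptrace_last n k (kron (1\<^sub>m N) \<phi> * B)"
  have nn: "n = (n-k) + k" using NK by simp
  have "?X = mat (2^(n-k)) (2^(n-k)) (\<lambda>(a,a'). \<Sum>\<tau>\<in>pauli_strings (n-k). c' \<tau> * pauli_op \<tau> $$ (a,a'))"
  proof (rule eq_matI)
    fix a a' assume "a < dim_row (mat (2^(n-k)) (2^(n-k)) (\<lambda>(a,a'). \<Sum>\<tau>\<in>pauli_strings (n-k). c' \<tau> * pauli_op \<tau> $$ (a,a')))"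
      "a' < dim_col (mat (2^(n-k)) (2^(n-k)) (\<lambda>(a,a'). \<Sum>\<tau>\<in>pauli_strings (n-k). c' \<tau> * pauli_op \<tau> $$ (a,a')))"
    hence a: "a < N" "a' < N" using NK by auto
    have Pe: "pauli_op (\<tau> @ \<rho>) $$ (a*K+c, a'*K+b) = pauli_op \<tau> $$ (a,a') * pauli_op \<rho> $$ (c,b)"
      if "\<tau> \<in> pauli_strings (n-k)" "\<rho> \<in> pauli_strings k" "b < K" "c < K" for \<tau> \<rho> b c
    proof -
      have l: "length \<tau> = n-k" "length \<rho> = k" using that by (auto simp: pauli_strings_def)
      have "2^(length \<tau> + length \<rho>) = N*K" using l NK nn by (metis power_add)
      thus ?thesis using pauli_op_append[of "a*K+c" \<tau> \<rho> "a'*K+b"] l NK that blk_less a by simp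
    qed
    have Be: "B $$ (a*K+c, a'*K+b) = (\<Sum>\<tau>\<in>pauli_strings (n-k). \<Sum>\<rho>\<in>pauli_strings k. co (\<tau> @ \<rho>) * (pauli_op \<tau> $$ (a,a') * pauli_op \<rho> $$ (c,b)))"
      if "b < K" "c < K" for b c
    proof -
      have "B $$ (a*K+c, a'*K+b) = (\<Sum>\<sigma>\<in>pauli_strings ((n-k)+k). co \<sigma> * pauli_op \<sigma> $$ (a*K+c, a'*K+b))"
        using expansion_entry[OF exp, of "a*K+c" "a'*K+b"] NK blk_less a that nn by simp
      also have "\<dots> = (\<Sum>\<tau>\<in>pauli_strings (n-k). \<Sum>\<rho>\<in>pauli_strings k. co (\<tau> @ \<rho>) * pauli_op (\<tau> @ \<rho>) $$ (a*K+c, a'*K+b))"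
        by (rule sum_strings_append)
      also have "\<dots> = (\<Sum>\<tau>\<in>pauli_strings (n-k). \<Sum>\<rho>\<in>pauli_strings k. co (\<tau> @ \<rho>) * (pauli_op \<tau> $$ (a,a') * pauli_op \<rho> $$ (c,b)))"
        using that by (intro sum.cong refl) (simp add: Pe)
      finally show ?thesis .
    qed
    let ?f = "\<lambda>\<tau> \<rho> b c. \<phi> $$ (b,c) * (co (\<tau> @ \<rho>) * (pauli_op \<tau> $$ (a,a') * pauli_op \<rho> $$ (c,b)))"
    let ?T = "pauli_strings (n-k)" and ?R = "pauli_strings k"
    have "?X $$ (a,a') = (\<Sum>b<K. \<Sum>c<K. \<phi> $$ (b,c) * B $$ (a*K+c, a'*K+b))"
      using ptrace_entry[OF _ phi NK(1-3) a] B by simp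
    also have "\<dots> = (\<Sum>b<K. \<Sum>c<K. \<Sum>\<tau>\<in>?T. \<Sum>\<rho>\<in>?R. ?f \<tau> \<rho> b c)"
      by (intro sum.cong refl) (simp add: Be sum_distrib_left)
    also have "\<dots> = (\<Sum>b<K. \<Sum>\<tau>\<in>?T. \<Sum>c<K. \<Sum>\<rho>\<in>?R. ?f \<tau> \<rho> b c)"
      by (rule sum.cong[OF refl], rule sum.swap)
    also have "\<dots> = (\<Sum>\<tau>\<in>?T. \<Sum>b<K. \<Sum>c<K. \<Sum>\<rho>\<in>?R. ?f \<tau> \<rho> b c)"
      by (rule sum.swap)
    also have "\<dots> = (\<Sum>\<tau>\<in>?T. \<Sum>b<K. \<Sum>\<rho>\<in>?R. \<Sum>c<K. ?f \<tau> \<rho> b c)"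
      by (rule sum.cong[OF refl], rule sum.cong[OF refl], rule sum.swap)
    also have "\<dots> = (\<Sum>\<tau>\<in>?T. \<Sum>\<rho>\<in>?R. \<Sum>b<K. \<Sum>c<K. ?f \<tau> \<rho> b c)"
      by (rule sum.cong[OF refl], rule sum.swap)
    also have "\<dots> = (\<Sum>\<tau>\<in>?T. c' \<tau> * pauli_op \<tau> $$ (a,a'))"
    proof (rule sum.cong[OF refl])
      fix \<tau>
      have "(\<Sum>\<rho>\<in>?R. \<Sum>b<K. \<Sum>c<K. ?f \<tau> \<rho> b c) = (\<Sum>\<rho>\<in>?R. pauli_op \<tau> $$ (a,a') * (co (\<tau> @ \<rho>) * t \<rho>))"
        unfolding t_def by (intro sum.cong refl) (simp add: sum_distrib_left mult_ac)
      also have "\<dots> = c' \<tau> * pauli_op \<tau> $$ (a,a')"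
        unfolding c'_def by (simp add: sum_distrib_left sum_distrib_right mult_ac)
      finally show "(\<Sum>\<rho>\<in>?R. \<Sum>b<K. \<Sum>c<K. ?f \<tau> \<rho> b c) = c' \<tau> * pauli_op \<tau> $$ (a,a')" .
    qed
    finally show "?X $$ (a,a') = mat (2^(n-k)) (2^(n-k)) (\<lambda>(a,a'). \<Sum>\<tau>\<in>pauli_strings (n-k). c' \<tau> * pauli_op \<tau> $$ (a,a')) $$ (a,a')"
      using a NK by simp
  qed (simp_all add: ptrace_last_def)
  hence ex: "pauli_expansion (n-k) ?X c'" unfolding pauli_expansion_def .
  have wt': "\<forall>\<tau>\<in>pauli_strings (n-k). c' \<tau> \<noteq> 0 \<longrightarrow> weight \<tau> \<le> d"
  proof (intro ballI impI)
    fix \<tau> assume t: "\<tau> \<in> pauli_strings (n-k)" and nz: "c' \<tau> \<noteq> 0"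
    then obtain \<rho> where r: "\<rho> \<in> pauli_strings k" "co (\<tau> @ \<rho>) \<noteq> 0"
      unfolding c'_def by (metis (no_types, lifting) mult_eq_0_iff sum.neutral)
    have "\<tau> @ \<rho> \<in> pauli_strings n" using t r(1) NK(4) by (auto simp: pauli_strings_def)
    hence "weight (\<tau> @ \<rho>) \<le> d" using wt r(2) by blast
    thus "weight \<tau> \<le> d" using weight_append[of \<tau> \<rho>] by linarith
  qed
  show ?thesis unfolding pauli_deg_def
    by (rule Least_le) (use ex wt' in blast)
qed


definition qf :: "nat \<Rightarrow> (nat \<Rightarrow> nat \<Rightarrow> complex) \<Rightarrow> (nat \<Rightarrow> complex) \<Rightarrow> complex" where
  "qf K f v = (\<Sum>i<K. \<Sum>j<K. cnj (v i) * f i j * v j)"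

definition psdf :: "nat \<Rightarrow> (nat \<Rightarrow> nat \<Rightarrow> complex) \<Rightarrow> bool" where
  "psdf K f \<longleftrightarrow> (\<forall>v. 0 \<le> Re (qf K f v))"

definition hermf :: "nat \<Rightarrow> (nat \<Rightarrow> nat \<Rightarrow> complex) \<Rightarrow> bool" where
  "hermf K f \<longleftrightarrow> (\<forall>i<K. \<forall>j<K. f i j = cnj (f j i))"

lemma qf_support:
  assumes "S \<subseteq> {..<K}" "\<And>l. l \<notin> S \<Longrightarrow> v l = 0"
  shows "qf K f v = (\<Sum>i\<in>S. \<Sum>j\<in>S. cnj (v i) * f i j * v j)"
proof -
  have "qf K f v = (\<Sum>i<K. \<Sum>j\<in>S. cnj (v i) * f i j * v j)"
    unfolding qf_def
    by (rule sum.cong[OF refl], rule sum.mono_neutral_right) (use assms in auto)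
  also have "\<dots> = (\<Sum>i\<in>S. \<Sum>j\<in>S. cnj (v i) * f i j * v j)"
    by (rule sum.mono_neutral_right) (use assms in auto)
  finally show ?thesis .
qed


lemma qf_single:
  assumes "p < K"
  shows "qf K f (\<lambda>l. if l = p then 1 else 0) = f p p"
  using qf_support[of "{p}" K "\<lambda>l. if l = p then 1 else 0" f] assms by simp

lemma qf_two:
  assumes "p < K" "i < K" "i \<noteq> p"
  shows "qf K f (\<lambda>l. if l = i then 1 else if l = p then y else 0) = f i i + f i p * y + cnj y * f p i + cnj y * f p p * y"
  using qf_support[of "{i,p}" K "\<lambda>l. if l = i then 1 else if l = p then y else 0" f] assms by simp

lemma zero_diag:
  assumes h: "hermf K f" and ps: "psdf K f" and p: "p < K" and fpp: "f p p = 0" and i: "i < K"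
  shows "f i p = 0"
proof (rule ccontr)
  assume nz: "f i p \<noteq> 0"
  hence ip: "i \<noteq> p" using fpp by auto
  obtain x where x: "f i p = x" by blast
  have fpi: "f p i = cnj x" using h[unfolded hermf_def, rule_format, OF p i] x by simp
  have n2: "0 < (cmod x)^2" using nz x by simp
  define t where "t = (\<bar>Re (f i i)\<bar> + 1) / (2 * (cmod x)^2)"
  define y where "y = - complex_of_real t * cnj x"
  have xy: "x * y = - complex_of_real (t * (cmod x)^2)"
  proof -
    have "x * y = - complex_of_real t * (x * cnj x)" unfolding y_def by (simp only: mult_ac mult_minus_left mult_minus_right)
    also have "x * cnj x = complex_of_real ((cmod x)^2)" by (metis complex_norm_square of_real_power)
    finally show ?thesis by simp
  qed
  have yx: "cnj y * cnj x = - complex_of_real (t * (cmod x)^2)"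
  proof -
    have "cnj y * cnj x = cnj (x * y)" by (simp only: complex_cnj_mult mult.commute)
    thus ?thesis using xy by simp
  qed
  have Q: "qf K f (\<lambda>l. if l = i then 1 else if l = p then y else 0) = f i i + x * y + cnj y * cnj x"
    using qf_two[OF p i ip, of f y] unfolding fpp fpi x by simp
  have "Re (qf K f (\<lambda>l. if l = i then 1 else if l = p then y else 0)) = Re (f i i) - 2 * t * (cmod x)^2"
    unfolding Q xy yx by simp
  also have "\<dots> = Re (f i i) - (\<bar>Re (f i i)\<bar> + 1)" unfolding t_def using n2 by (simp add: field_simps)
  also have "\<dots> < 0" by linarith
  finally show False using ps unfolding psdf_def by (metis not_le)
qed


lemma psd_factor_aux:
  assumes "finite S"
  shows "\<forall>f. S \<subseteq> {..<K} \<longrightarrow> hermf K f \<longrightarrow> psdf K f \<longrightarrow> (\<forall>i<K. \<forall>j<K. (i \<notin> S \<or> j \<notin> S) \<longrightarrow> f i j = 0)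
     \<longrightarrow> (\<exists>rs. \<forall>i<K. \<forall>j<K. f i j = (\<Sum>r\<leftarrow>rs. r i * cnj (r j)))"
  using assms
proof (induction S rule: finite_induct)
  case empty
  show ?case by (intro allI impI exI[of _ "[]"]) auto
next
  case (insert p S)
  show ?case
  proof (intro allI impI)
    fix f assume sub: "insert p S \<subseteq> {..<K}" and h: "hermf K f" and ps: "psdf K f"
      and sup: "\<forall>i<K. \<forall>j<K. (i \<notin> insert p S \<or> j \<notin> insert p S) \<longrightarrow> f i j = 0"
    have pK: "p < K" using sub by auto
    have subS: "S \<subseteq> {..<K}" using sub by auto
    have hr: "f i j = cnj (f j i)" if "i<K" "j<K" for i j using h that unfolding hermf_def by blast
    show "\<exists>rs. \<forall>i<K. \<forall>j<K. f i j = (\<Sum>r\<leftarrow>rs. r i * cnj (r j))"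
    proof (cases "f p p = 0")
      case True
      have col: "f i p = 0" if "i<K" for i using zero_diag[OF h ps pK True that] .
      have row: "f p j = 0" if "j<K" for j using hr[OF pK that] col[OF that] by simp
      have "\<forall>i<K. \<forall>j<K. (i \<notin> S \<or> j \<notin> S) \<longrightarrow> f i j = 0"
      proof (intro allI impI)
        fix i j assume "i < K" "j < K" "i \<notin> S \<or> j \<notin> S"
        thus "f i j = 0" using sup row col by (cases "i = p"; cases "j = p") auto
      qed
      then show ?thesis using insert.IH subS h ps by blast
    next
      case False
      define d where "d = Re (f p p)"
      have "f p p = cnj (f p p)" using hr[OF pK pK] .
      hence fpp: "f p p = complex_of_real d" unfolding d_def by (metis Reals_cnj_iff complex_is_Real_iff of_real_Re)
      have "0 \<le> Re (qf K f (\<lambda>l. if l = p then 1 else 0))" using ps unfolding psdf_def by blast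
      hence "0 \<le> d" unfolding d_def qf_single[OF pK] .
      moreover have "d \<noteq> 0" using False fpp by auto
      ultimately have dpos: "0 < d" by simp
      define sd where "sd = complex_of_real (sqrt d)"
      have sd0: "sd \<noteq> 0" unfolding sd_def using dpos by simp
      have sdc: "cnj sd = sd" unfolding sd_def by simp
      have "sqrt d * sqrt d = d" using dpos by simp
      hence sdsq: "sd * sd = f p p" unfolding sd_def fpp by (simp only: of_real_mult[symmetric])
      define r where "r i = f i p / sd" for i
      define g where "g i j = f i j - r i * cnj (r j)" for i j
      have cr: "cnj (r j) = f p j / sd" if "j < K" for j
        unfolding r_def using hr[OF pK that] sdc by simp
      have rr: "r i * cnj (r j) = f i p * f p j / f p p" if "j < K" for i j
      proof -
        have "r i * cnj (r j) = f i p / sd * (f p j / sd)" unfolding cr[OF that] by (simp add: r_def)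
        also have "\<dots> = f i p * f p j / (sd * sd)" by simp
        finally show ?thesis unfolding sdsq .
      qed
      have gsup: "\<forall>i<K. \<forall>j<K. (i \<notin> S \<or> j \<notin> S) \<longrightarrow> g i j = 0"
      proof (intro allI impI)
        fix i j assume ij: "i < K" "j < K" "i \<notin> S \<or> j \<notin> S"
        show "g i j = 0"
        proof (cases "i = p \<or> j = p")
          case True
          thus ?thesis unfolding g_def rr[OF ij(2)] using False by auto
        next
          case nn: False
          hence "i \<notin> insert p S \<or> j \<notin> insert p S" using ij(3) by auto
          hence "f i j = 0" "f i p = 0 \<or> f p j = 0" using sup ij pK by auto
          thus ?thesis unfolding g_def rr[OF ij(2)] by auto
        qed
      qed
      have gh: "hermf K g" unfolding hermf_def
      proof (intro allI impI)
        fix i j assume ij: "i < K" "j < K"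
        have "cnj (g j i) = cnj (f j i) - cnj (f j p) * cnj (f p i) / cnj (f p p)"
          unfolding g_def rr[OF ij(1)] by simp
        also have "\<dots> = f i j - f p j * f i p / f p p"
          using hr[OF ij, symmetric] hr[OF pK ij(2), symmetric] hr[OF ij(1) pK, symmetric] hr[OF pK pK, symmetric] by simp
        finally show "g i j = cnj (g j i)" unfolding g_def rr[OF ij(2)] by (simp add: mult.commute)
      qed
      have gq: "qf K g w = qf K f w - (\<Sum>i<K. cnj (w i) * r i) * (\<Sum>j<K. cnj (r j) * w j)" for w
      proof -
        have "qf K g w = (\<Sum>i<K. \<Sum>j<K. cnj (w i) * f i j * w j - cnj (w i) * r i * (cnj (r j) * w j))"
          unfolding qf_def g_def by (intro sum.cong refl) (simp add: algebra_simps)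
        also have "\<dots> = qf K f w - (\<Sum>i<K. \<Sum>j<K. cnj (w i) * r i * (cnj (r j) * w j))"
          unfolding qf_def by (simp only: sum_subtractf)
        also have "\<dots> = qf K f w - (\<Sum>i<K. cnj (w i) * r i) * (\<Sum>j<K. cnj (r j) * w j)"
          by (simp only: sum_product)
        finally show ?thesis .
      qed
      have gp: "psdf K g" unfolding psdf_def
      proof
        fix v
        define \<alpha> where "\<alpha> = (\<Sum>j<K. f p j * v j)"
        define w where "w = v(p := v p - \<alpha> / f p p)"
        have "(\<Sum>j<K. f p j * w j) = (\<Sum>j<K. f p j * v j + (if j = p then - f p p * (\<alpha> / f p p) else 0))"
          unfolding w_def by (intro sum.cong refl) (auto simp: algebra_simps)
        also have "\<dots> = \<alpha> - f p p * (\<alpha> / f p p)" unfolding \<alpha>_def sum.distrib using pK by simp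
        also have "\<dots> = 0" using False by simp
        finally have z: "(\<Sum>j<K. f p j * w j) = 0" .
        have "(\<Sum>j<K. cnj (r j) * w j) = (\<Sum>j<K. f p j * w j) / sd"
          unfolding sum_divide_distrib by (intro sum.cong refl) (simp add: cr)
        hence z2: "(\<Sum>j<K. cnj (r j) * w j) = 0" using z by simp
        have g0: "g i j = 0" if "i = p \<or> j = p" "i < K" "j < K" for i j
          using that False unfolding g_def rr[OF that(3)] by auto
        have "qf K g v = qf K g w"
          unfolding qf_def
        proof (intro sum.cong refl)
          fix i j assume "i \<in> {..<K}" "j \<in> {..<K}"
          thus "cnj (v i) * g i j * v j = cnj (w i) * g i j * w j"
            using g0[of i j] unfolding w_def by (cases "i = p \<or> j = p") auto
        qed
        also have "\<dots> = qf K f w" using gq[of w] z2 by simp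
        finally show "0 \<le> Re (qf K g v)" using ps unfolding psdf_def by simp
      qed
      obtain rs where rs: "\<forall>i<K. \<forall>j<K. g i j = (\<Sum>r\<leftarrow>rs. r i * cnj (r j))"
        using insert.IH subS gh gp gsup by blast
      show ?thesis
      proof (intro exI[of _ "r # rs"] allI impI)
        fix i j assume "i < K" "j < K"
        hence "f i j - r i * cnj (r j) = (\<Sum>r\<leftarrow>rs. r i * cnj (r j))" using rs unfolding g_def by blast
        thus "f i j = (\<Sum>r\<leftarrow>r # rs. r i * cnj (r j))" by (simp add: algebra_simps)
      qed
    qed
  qed
qed

lemma psd_factor:
  assumes "hermf K f" "psdf K f"
  shows "\<exists>rs. \<forall>i<K. \<forall>j<K. f i j = (\<Sum>r\<leftarrow>rs. r i * cnj (r j))"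
  using psd_factor_aux[of "{..<K}" K] assms by auto



lemma vnorm_L2: "vnorm v = L2_set (\<lambda>i. cmod (v$i)) {..<dim_vec v}"
  by (simp add: vnorm_def L2_set_def)

lemma mult_vec_entry:
  assumes "A \<in> carrier_mat R C" "v \<in> carrier_vec C" "i < R"
  shows "(A *\<^sub>v v) $ i = (\<Sum>j<C. A $$ (i,j) * v $ j)"
  using assms by (simp add: scalar_prod_def lessThan_atLeast0)

lemma vnorm_smult: "vnorm (c \<cdot>\<^sub>v v) = cmod c * vnorm v"
  unfolding vnorm_L2 by (subst L2_set_right_distrib) (auto intro!: L2_set_cong simp: norm_mult)

lemma vnorm_zero: "(\<And>i. i < dim_vec v \<Longrightarrow> v $ i = 0) \<Longrightarrow> vnorm v = 0"
  unfolding vnorm_def by simp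

lemma vnorm_nonneg: "0 \<le> vnorm v"
  unfolding vnorm_L2 by simp

lemma vnorm_entry_le: "j < dim_vec v \<Longrightarrow> cmod (v $ j) \<le> vnorm v"
  unfolding vnorm_L2 by (rule member_le_L2_set) auto

lemma spec_bdd:
  assumes A: "A \<in> carrier_mat R C"
  shows "bdd_above {vnorm (A *\<^sub>v v) | v. v \<in> carrier_vec (dim_col A) \<and> vnorm v \<le> 1}"
proof (rule bdd_aboveI)
  fix x assume "x \<in> {vnorm (A *\<^sub>v v) | v. v \<in> carrier_vec (dim_col A) \<and> vnorm v \<le> 1}"
  then obtain v where v: "v \<in> carrier_vec C" "vnorm v \<le> 1" and x: "x = vnorm (A *\<^sub>v v)" using A by auto
  have "cmod ((A *\<^sub>v v) $ i) \<le> (\<Sum>j<C. cmod (A $$ (i,j)))" if "i < R" for i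
  proof -
    have "cmod ((A *\<^sub>v v) $ i) \<le> (\<Sum>j<C. cmod (A $$ (i,j) * v $ j))"
      unfolding mult_vec_entry[OF A v(1) that] by (rule norm_sum)
    also have "\<dots> \<le> (\<Sum>j<C. cmod (A $$ (i,j)))"
    proof (rule sum_mono)
      fix j assume "j \<in> {..<C}"
      hence "cmod (v $ j) \<le> 1" using vnorm_entry_le[of j v] v by auto
      thus "cmod (A $$ (i,j) * v $ j) \<le> cmod (A $$ (i,j))"
        unfolding norm_mult by (simp add: mult_left_le)
    qed
    finally show ?thesis .
  qed
  hence "x \<le> L2_set (\<lambda>i. \<Sum>j<C. cmod (A $$ (i,j))) {..<R}"
  proof -
    have dA: "dim_vec (A *\<^sub>v v) = R" using A by simp
    show ?thesis unfolding x vnorm_L2 dA by (rule L2_set_mono) (use \<open>\<And>i. i < R \<Longrightarrow> _\<close> in auto)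
  qed
  thus "x \<le> L2_set (\<lambda>i. \<Sum>j<C. cmod (A $$ (i,j))) {..<R}" .
qed

lemma spec_nonneg:
  assumes A: "A \<in> carrier_mat R C"
  shows "0 \<le> spec_norm A"
proof -
  have "vnorm (0\<^sub>v C) = 0" by (rule vnorm_zero) simp
  hence "0\<^sub>v C \<in> carrier_vec (dim_col A) \<and> vnorm (0\<^sub>v C) \<le> 1" using A by auto
  hence m: "vnorm (A *\<^sub>v 0\<^sub>v C) \<in> {vnorm (A *\<^sub>v v) | v. v \<in> carrier_vec (dim_col A) \<and> vnorm v \<le> 1}"
    by blast
  have z: "vnorm (A *\<^sub>v 0\<^sub>v C) = 0" using A by (intro vnorm_zero) (simp add: mult_vec_entry)
  show ?thesis using cSup_upper[OF m spec_bdd[OF A]] unfolding z spec_norm_def .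
qed

lemma spec_bound:
  assumes A: "A \<in> carrier_mat R C" and w: "w \<in> carrier_vec C"
  shows "vnorm (A *\<^sub>v w) \<le> spec_norm A * vnorm w"
proof (cases "vnorm w = 0")
  case True
  hence "\<forall>j\<in>{..<C}. cmod (w $ j) = 0" using w unfolding vnorm_L2 by (subst (asm) L2_set_eq_0_iff) auto
  hence "(A *\<^sub>v w) $ i = 0" if "i < R" for i unfolding mult_vec_entry[OF A w that] by simp
  hence "vnorm (A *\<^sub>v w) = 0" unfolding vnorm_def using A by simp
  thus ?thesis using True by simp
next
  case False
  have pos: "0 < vnorm w" using False vnorm_nonneg[of w] by linarith
  define c where "c = complex_of_real (1 / vnorm w)"
  have v: "c \<cdot>\<^sub>v w \<in> carrier_vec C" using w by simp
  have cc: "cmod c = 1 / vnorm w" unfolding c_def norm_of_real using pos by simp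
  have nv: "vnorm (c \<cdot>\<^sub>v w) = 1" unfolding vnorm_smult cc using pos by simp
  have "vnorm (A *\<^sub>v (c \<cdot>\<^sub>v w)) \<le> spec_norm A"
    unfolding spec_norm_def
    by (rule cSup_upper[OF _ spec_bdd[OF A]]) (use v nv A in auto)
  moreover have "vnorm (A *\<^sub>v (c \<cdot>\<^sub>v w)) = vnorm (A *\<^sub>v w) / vnorm w"
    unfolding mult_mat_vec[OF A w] vnorm_smult cc by simp
  ultimately have "vnorm (A *\<^sub>v w) / vnorm w \<le> spec_norm A" by simp
  thus ?thesis using pos by (simp only: pos_divide_le_eq)
qed


lemma L2_set_sum_le:
  "L2_set (\<lambda>a. \<Sum>t<(m::nat). g t a) A \<le> (\<Sum>t<m. L2_set (g t) A)"
proof (induction m)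
  case 0 thus ?case by (simp add: L2_set_def)
next
  case (Suc m)
  have "L2_set (\<lambda>a. \<Sum>t<Suc m. g t a) A = L2_set (\<lambda>a. (\<Sum>t<m. g t a) + g m a) A" by simp
  also have "\<dots> \<le> L2_set (\<lambda>a. \<Sum>t<m. g t a) A + L2_set (g m) A" by (rule L2_set_triangle_ineq)
  also have "\<dots> \<le> (\<Sum>t<m. L2_set (g t) A) + L2_set (g m) A" using Suc.IH by simp
  finally show ?case by simp
qed

lemma L2_blocks:
  "L2_set (\<lambda>a. L2_set (\<lambda>c. h (a*K+c)) {..<K}) {..<N} = L2_set h {..<(N::nat)*K}"
proof -
  have "(\<Sum>a<N. (L2_set (\<lambda>c. h (a*K+c)) {..<K})^2) = (\<Sum>a<N. \<Sum>c<K. (h (a*K+c))^2)"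
    unfolding L2_set_def by (intro sum.cong refl) (simp add: sum_nonneg)
  also have "\<dots> = (\<Sum>l<N*K. (h l)^2)" by (rule sum_blocks[symmetric])
  finally show ?thesis unfolding L2_set_def[of _ "{..<N}"] L2_set_def[of _ "{..<N*K}"] by simp
qed

lemma L2_tensor:
  "L2_set (\<lambda>l. cmod (u (l div K) * r (l mod K))) {..<(N::nat)*K} = L2_set (\<lambda>a. cmod (u a)) {..<N} * L2_set (\<lambda>c. cmod (r c)) {..<K}"
proof -
  have "L2_set (\<lambda>l. cmod (u (l div K) * r (l mod K))) {..<N*K}
      = L2_set (\<lambda>a. L2_set (\<lambda>c. cmod (u ((a*K+c) div K) * r ((a*K+c) mod K))) {..<K}) {..<N}"
    by (rule L2_blocks[symmetric])
  also have "\<dots> = L2_set (\<lambda>a. L2_set (\<lambda>c. cmod (u a) * cmod (r c)) {..<K}) {..<N}"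
    by (intro L2_set_cong refl) (simp add: norm_mult)
  also have "\<dots> = L2_set (\<lambda>a. cmod (u a) * L2_set (\<lambda>c. cmod (r c)) {..<K}) {..<N}"
    by (intro L2_set_cong refl) (simp add: L2_set_right_distrib)
  also have "\<dots> = L2_set (\<lambda>a. cmod (u a)) {..<N} * L2_set (\<lambda>c. cmod (r c)) {..<K}"
    by (simp add: L2_set_left_distrib)
  finally show ?thesis .
qed


lemma ptrace_dims: "ptrace_last n k X \<in> carrier_mat (2^(n-k)) (2^(n-k))"
  by (simp add: ptrace_last_def)

lemma ptrace_contract:
  assumes A: "A \<in> carrier_mat (N*K) (N*K)" and phi: "\<phi> \<in> carrier_mat K K"
    and NK: "2^(n-k) = N" "2^k = K" "2^n = N*K"
    and R: "\<And>b c. b < K \<Longrightarrow> c < K \<Longrightarrow> \<phi> $$ (b,c) = (\<Sum>t<m. R t b * cnj (R t c))"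
    and tr: "(\<Sum>t<(m::nat). (L2_set (\<lambda>c. cmod (R t c)) {..<K})^2) = 1"
  shows "spec_norm (ptrace_last n k (kron (1\<^sub>m N) \<phi> * A)) \<le> spec_norm A"
proof -
  let ?X = "ptrace_last n k (kron (1\<^sub>m N) \<phi> * A)"
  have X: "?X \<in> carrier_mat N N" using ptrace_dims[of n k] NK by simp
  define s where "s = spec_norm A"
  define nr where "nr t = L2_set (\<lambda>c. cmod (R t c)) {..<K}" for t
  have key: "vnorm (?X *\<^sub>v u) \<le> s" if u: "u \<in> carrier_vec N" "vnorm u \<le> 1" for u
  proof -
    define w where "w t = vec (N*K) (\<lambda>l. u $ (l div K) * R t (l mod K))" for t
    have w: "w t \<in> carrier_vec (N*K)" for t unfolding w_def by simp
    define y where "y t a = (\<Sum>c<K. cnj (R t c) * (A *\<^sub>v w t) $ (a*K+c))" for t a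
    have Aw: "(A *\<^sub>v w t) $ (a*K+c) = (\<Sum>a'<N. \<Sum>b<K. A $$ (a*K+c, a'*K+b) * (u $ a' * R t b))"
      if "a < N" "c < K" for t a c
    proof -
      have "(A *\<^sub>v w t) $ (a*K+c) = (\<Sum>l<N*K. A $$ (a*K+c, l) * w t $ l)"
        using mult_vec_entry[OF A w blk_less[OF that]] .
      also have "\<dots> = (\<Sum>a'<N. \<Sum>b<K. A $$ (a*K+c, a'*K+b) * w t $ (a'*K+b))" by (rule sum_blocks)
      also have "\<dots> = (\<Sum>a'<N. \<Sum>b<K. A $$ (a*K+c, a'*K+b) * (u $ a' * R t b))"
        by (intro sum.cong refl) (simp add: w_def blk_less)
      finally show ?thesis .
    qed
    define F where "F a t a' b c = R t b * cnj (R t c) * A $$ (a*K+c, a'*K+b) * u $ a'" for a t a' b c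
    have E: "(?X *\<^sub>v u) $ a = (\<Sum>t<m. y t a)" if a: "a < N" for a
    proof -
      have "(?X *\<^sub>v u) $ a = (\<Sum>a'<N. ?X $$ (a,a') * u $ a')" using mult_vec_entry[OF X u(1) a] .
      also have "\<dots> = (\<Sum>a'<N. (\<Sum>b<K. \<Sum>c<K. \<phi> $$ (b,c) * A $$ (a*K+c, a'*K+b)) * u $ a')"
        by (intro sum.cong refl) (simp add: ptrace_entry[OF A phi NK a])
      also have "\<dots> = (\<Sum>a'<N. \<Sum>b<K. \<Sum>c<K. \<Sum>t<m. F a t a' b c)"
        by (intro sum.cong refl) (simp add: F_def R sum_distrib_left sum_distrib_right mult_ac)
      also have "\<dots> = (\<Sum>a'<N. \<Sum>b<K. \<Sum>t<m. \<Sum>c<K. F a t a' b c)"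
        by (rule sum.cong[OF refl], rule sum.cong[OF refl], rule sum.swap)
      also have "\<dots> = (\<Sum>a'<N. \<Sum>t<m. \<Sum>b<K. \<Sum>c<K. F a t a' b c)"
        by (rule sum.cong[OF refl], rule sum.swap)
      also have "\<dots> = (\<Sum>t<m. \<Sum>a'<N. \<Sum>b<K. \<Sum>c<K. F a t a' b c)"
        by (rule sum.swap)
      also have "\<dots> = (\<Sum>t<m. \<Sum>a'<N. \<Sum>c<K. \<Sum>b<K. F a t a' b c)"
        by (rule sum.cong[OF refl], rule sum.cong[OF refl], rule sum.swap)
      also have "\<dots> = (\<Sum>t<m. \<Sum>c<K. \<Sum>a'<N. \<Sum>b<K. F a t a' b c)"
        by (rule sum.cong[OF refl], rule sum.swap)
      also have "\<dots> = (\<Sum>t<m. y t a)"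
        unfolding y_def
      proof (intro sum.cong refl)
        fix t c assume "c \<in> {..<K}"
        hence c: "c < K" by simp
        show "(\<Sum>a'<N. \<Sum>b<K. F a t a' b c) = cnj (R t c) * (A *\<^sub>v w t) $ (a*K+c)"
          unfolding Aw[OF a c] by (simp add: F_def sum_distrib_left mult_ac)
      qed
      finally show ?thesis .
    qed
    have yb: "L2_set (\<lambda>a. cmod (y t a)) {..<N} \<le> nr t * vnorm (A *\<^sub>v w t)" for t
    proof -
      have "cmod (y t a) \<le> nr t * L2_set (\<lambda>c. cmod ((A *\<^sub>v w t) $ (a*K+c))) {..<K}" for a
      proof -
        have "cmod (y t a) \<le> (\<Sum>c<K. cmod (cnj (R t c) * (A *\<^sub>v w t) $ (a*K+c)))"
          unfolding y_def by (rule norm_sum)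
        also have "\<dots> = (\<Sum>c<K. \<bar>cmod (R t c)\<bar> * \<bar>cmod ((A *\<^sub>v w t) $ (a*K+c))\<bar>)"
          by (simp add: norm_mult)
        also have "\<dots> \<le> nr t * L2_set (\<lambda>c. cmod ((A *\<^sub>v w t) $ (a*K+c))) {..<K}"
          unfolding nr_def by (rule L2_set_mult_ineq)
        finally show ?thesis .
      qed
      hence "L2_set (\<lambda>a. cmod (y t a)) {..<N} \<le> L2_set (\<lambda>a. nr t * L2_set (\<lambda>c. cmod ((A *\<^sub>v w t) $ (a*K+c))) {..<K}) {..<N}"
        by (intro L2_set_mono) auto
      also have "\<dots> = nr t * L2_set (\<lambda>a. L2_set (\<lambda>c. cmod ((A *\<^sub>v w t) $ (a*K+c))) {..<K}) {..<N}"
        unfolding nr_def by (simp add: L2_set_right_distrib)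
      also have "\<dots> = nr t * vnorm (A *\<^sub>v w t)"
        unfolding vnorm_L2 using A L2_blocks[where h="\<lambda>i. cmod ((A *\<^sub>v w t) $ i)" and K=K and N=N] by simp
      finally show ?thesis .
    qed
    have wn: "vnorm (w t) \<le> nr t" for t
    proof -
      have "vnorm (w t) = L2_set (\<lambda>l. cmod (u $ (l div K) * R t (l mod K))) {..<N*K}"
        unfolding vnorm_L2 w_def by (intro L2_set_cong) auto
      also have "\<dots> = vnorm u * nr t" unfolding L2_tensor nr_def vnorm_L2 using u by simp
      also have "\<dots> \<le> nr t" using u(2) vnorm_nonneg[of u] by (intro mult_left_le_one_le) (auto simp: nr_def)
      finally show ?thesis .
    qed
    have s0: "0 \<le> s" unfolding s_def by (rule spec_nonneg[OF A])
    have "vnorm (?X *\<^sub>v u) = L2_set (\<lambda>a. cmod (\<Sum>t<m. y t a)) {..<N}"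
      unfolding vnorm_L2 using X E by (intro L2_set_cong) auto
    also have "\<dots> \<le> L2_set (\<lambda>a. \<Sum>t<m. cmod (y t a)) {..<N}"
      by (intro L2_set_mono norm_sum) auto
    also have "\<dots> \<le> (\<Sum>t<m. L2_set (\<lambda>a. cmod (y t a)) {..<N})" by (rule L2_set_sum_le)
    also have "\<dots> \<le> (\<Sum>t<m. nr t * (s * nr t))"
    proof (rule sum_mono)
      fix t
      have "vnorm (A *\<^sub>v w t) \<le> s * vnorm (w t)" unfolding s_def by (rule spec_bound[OF A w])
      also have "\<dots> \<le> s * nr t" using wn s0 by (simp add: mult_left_mono)
      finally have "nr t * vnorm (A *\<^sub>v w t) \<le> nr t * (s * nr t)"
        by (simp add: mult_left_mono nr_def)
      thus "L2_set (\<lambda>a. cmod (y t a)) {..<N} \<le> nr t * (s * nr t)" using yb[of t] by linarith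
    qed
    also have "\<dots> = s * (\<Sum>t<m. (nr t)^2)" by (simp add: sum_distrib_left power2_eq_square mult_ac)
    also have "\<dots> = s" using tr unfolding nr_def by simp
    finally show ?thesis .
  qed
  have ne: "{vnorm (?X *\<^sub>v v) | v. v \<in> carrier_vec (dim_col ?X) \<and> vnorm v \<le> 1} \<noteq> {}"
  proof -
    have "vnorm (0\<^sub>v N) = 0" by (rule vnorm_zero) simp
    hence "0\<^sub>v N \<in> carrier_vec (dim_col ?X) \<and> vnorm (0\<^sub>v N) \<le> 1" using X by simp
    thus ?thesis by blast
  qed
  show ?thesis unfolding spec_norm_def[of ?X]
    by (rule cSup_least[OF ne]) (use key X in \<open>auto simp: s_def\<close>)
qed


lemma psd_factor_idx:
  assumes "hermf K f" "psdf K f"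
  shows "\<exists>m R. \<forall>i<K. \<forall>j<K. f i j = (\<Sum>t<(m::nat). R t i * cnj (R t j))"
proof -
  obtain rs where rs: "\<forall>i<K. \<forall>j<K. f i j = (\<Sum>r\<leftarrow>rs. r i * cnj (r j))" using psd_factor[OF assms] by blast
  have eq: "(\<Sum>r\<leftarrow>rs. r i * cnj (r j)) = (\<Sum>t<length rs. (rs ! t) i * cnj ((rs ! t) j))" for i j
    by (simp add: sum_list_sum_nth atLeast0LessThan)
  show ?thesis
    by (rule exI[of _ "length rs"], rule exI[of _ "\<lambda>t. rs ! t"]) (use rs eq in simp)
qed

lemma density_hp:
  assumes "density_op k \<phi>"
  shows "hermf (2^k) (\<lambda>i j. \<phi> $$ (i,j))" "psdf (2^k) (\<lambda>i j. \<phi> $$ (i,j))"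
proof -
  have phi: "\<phi> \<in> carrier_mat (2^k) (2^k)" and h: "hermitian \<phi>"
    and ps: "\<forall>v \<in> carrier_vec (2^k). 0 \<le> Re (\<Sum>i<2^k. cnj (v $ i) * (\<phi> *\<^sub>v v) $ i)"
    using assms unfolding density_op_def by auto
  show "hermf (2^k) (\<lambda>i j. \<phi> $$ (i,j))" unfolding hermf_def
  proof (intro allI impI)
    fix i j :: nat assume "i < 2^k" "j < 2^k"
    moreover have "\<forall>i<dim_row \<phi>. \<forall>j<dim_col \<phi>. \<phi> $$ (i,j) = cnj (\<phi> $$ (j,i))" using h unfolding hermitian_def by blast
    moreover have "dim_row \<phi> = 2^k" "dim_col \<phi> = 2^k" using phi by auto
    ultimately show "\<phi> $$ (i,j) = cnj (\<phi> $$ (j,i))" by metis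
  qed
  show "psdf (2^k) (\<lambda>i j. \<phi> $$ (i,j))" unfolding psdf_def
  proof
    fix v :: "nat \<Rightarrow> complex"
    define vv where "vv = vec (2^k) v"
    have vv: "vv \<in> carrier_vec (2^k)" unfolding vv_def by simp
    have "(\<Sum>i<2^k. cnj (vv $ i) * (\<phi> *\<^sub>v vv) $ i) = qf (2^k) (\<lambda>i j. \<phi> $$ (i,j)) v"
      unfolding qf_def
    proof (intro sum.cong refl)
      fix i assume "i \<in> {..<(2::nat)^k}"
      hence i: "i < 2^k" by simp
      show "cnj (vv $ i) * (\<phi> *\<^sub>v vv) $ i = (\<Sum>j<2^k. cnj (v i) * \<phi> $$ (i,j) * v j)"
        unfolding mult_vec_entry[OF phi vv i] using i by (simp add: vv_def sum_distrib_left mult_ac)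
    qed
    thus "0 \<le> Re (qf (2^k) (\<lambda>i j. \<phi> $$ (i,j)) v)" using ps vv by metis
  qed
qed

lemma spec_norm_zero:
  assumes "A \<in> carrier_mat R C" "\<And>i j. i < R \<Longrightarrow> j < C \<Longrightarrow> A $$ (i,j) = 0"
  shows "spec_norm A \<le> 0"
  unfolding spec_norm_def
proof (rule cSup_least)
  have "vnorm (0\<^sub>v C) = 0" by (rule vnorm_zero) simp
  hence "0\<^sub>v C \<in> carrier_vec (dim_col A) \<and> vnorm (0\<^sub>v C) \<le> 1" using assms by simp
  thus "{vnorm (A *\<^sub>v v) | v. v \<in> carrier_vec (dim_col A) \<and> vnorm v \<le> 1} \<noteq> {}" by blast
next
  fix x assume "x \<in> {vnorm (A *\<^sub>v v) | v. v \<in> carrier_vec (dim_col A) \<and> vnorm v \<le> 1}"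
  then obtain v where v: "v \<in> carrier_vec C" "x = vnorm (A *\<^sub>v v)" using assms by auto
  have e: "(A *\<^sub>v v) $ i = 0" if "i < R" for i
    unfolding mult_vec_entry[OF assms(1) v(1) that] using assms(2) that by simp
  have "vnorm (A *\<^sub>v v) = 0"
    by (rule vnorm_zero) (use assms e in simp)
  thus "x \<le> 0" using v by simp
qed

theorem lemma2p12:
  fixes M \<phi> :: "complex mat" and n k :: nat and \<epsilon> :: real
  assumes "M \<in> carrier_mat (2^n) (2^n)" and "hermitian M"
    and "k \<le> n" and "density_op k \<phi>"
    and "0 \<le> \<epsilon>" and "\<epsilon> \<le> 1"
  shows "approx_deg (n - k) \<epsilon> (ptrace_last n k (kron (1\<^sub>m (2^(n-k))) \<phi> * M))
         \<le> approx_deg n \<epsilon> M"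
proof -
  define N :: nat where "N = 2^(n-k)"
  define K :: nat where "K = 2^k"
  have NK: "2^(n-k) = N" "2^k = K" "2^n = N*K"
    unfolding N_def K_def using assms(3) by (simp_all add: power_add[symmetric])
  have M: "M \<in> carrier_mat (N*K) (N*K)" using assms(1) NK by simp
  have phi: "\<phi> \<in> carrier_mat K K" using assms(4) unfolding density_op_def K_def by simp
  obtain m R where R: "\<forall>i<K. \<forall>j<K. \<phi> $$ (i,j) = (\<Sum>t<(m::nat). R t i * cnj (R t j))"
    using psd_factor_idx[OF density_hp[OF assms(4)]] unfolding K_def by blast
  have tr: "(\<Sum>t<m. (L2_set (\<lambda>c. cmod (R t c)) {..<K})^2) = 1"
  proof -
    have one: "(\<Sum>i<K. \<phi> $$ (i,i)) = 1" using assms(4) unfolding density_op_def K_def by simp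
    have sq: "z * cnj z = complex_of_real ((cmod z)^2)" for z by (metis complex_norm_square of_real_power)
    have "(\<Sum>i<K. \<phi> $$ (i,i)) = (\<Sum>i<K. \<Sum>t<m. complex_of_real ((cmod (R t i))^2))"
      using R by (intro sum.cong refl) (simp only: sq lessThan_iff)
    also have "\<dots> = (\<Sum>t<m. \<Sum>i<K. complex_of_real ((cmod (R t i))^2))"
      by (rule sum.swap)
    also have "\<dots> = complex_of_real (\<Sum>t<m. \<Sum>i<K. (cmod (R t i))^2)"
      by (simp only: of_real_sum)
    finally have "complex_of_real (\<Sum>t<m. \<Sum>i<K. (cmod (R t i))^2) = 1" using one by metis
    hence "(\<Sum>t<m. \<Sum>i<K. (cmod (R t i))^2) = 1" by (simp only: of_real_eq_1_iff)
    thus ?thesis unfolding L2_set_def by (simp add: sum_nonneg)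
  qed
  let ?P = "\<lambda>d. \<exists>B \<in> carrier_mat (2^n) (2^n). spec_norm (M - B) \<le> \<epsilon> \<and> pauli_deg n B = d"
  have "?P (pauli_deg n M)"
  proof (intro bexI conjI)
    show "spec_norm (M - M) \<le> \<epsilon>"
      using spec_norm_zero[of "M - M" "2^n" "2^n"] assms(1,5) by auto
  qed (use assms(1) in auto)
  hence "?P (approx_deg n \<epsilon> M)" unfolding approx_deg_def by (rule LeastI)
  then obtain B where B: "B \<in> carrier_mat (2^n) (2^n)" "spec_norm (M - B) \<le> \<epsilon>"
    and dB: "pauli_deg n B = approx_deg n \<epsilon> M" by blast
  have BNK: "B \<in> carrier_mat (N*K) (N*K)" using B NK by simp
  let ?Q = "\<lambda>d. \<exists>c. pauli_expansion n B c \<and> (\<forall>\<sigma>\<in>pauli_strings n. c \<sigma> \<noteq> 0 \<longrightarrow> weight \<sigma> \<le> d)"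
  obtain c0 where c0: "pauli_expansion n B c0" using pauli_expansion_exists[OF B(1)] by blast
  have "?Q n"
  proof (intro exI conjI ballI impI)
    fix \<sigma> assume "\<sigma> \<in> pauli_strings n"
    thus "weight \<sigma> \<le> n" unfolding weight_def pauli_strings_def by (metis (mono_tags) length_filter_le mem_Collect_eq)
  qed (rule c0)
  hence "?Q (pauli_deg n B)" unfolding pauli_deg_def by (rule LeastI)
  then obtain co where co: "pauli_expansion n B co" "\<forall>\<sigma>\<in>pauli_strings n. co \<sigma> \<noteq> 0 \<longrightarrow> weight \<sigma> \<le> pauli_deg n B"
    by blast
  have degB: "pauli_deg (n-k) (ptrace_last n k (kron (1\<^sub>m N) \<phi> * B)) \<le> pauli_deg n B"
    by (rule ptrace_deg[OF BNK phi NK assms(3) co])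
  have MB: "M - B \<in> carrier_mat (N*K) (N*K)" by (rule minus_carrier_mat[OF BNK])
  have lin: "ptrace_last n k (kron (1\<^sub>m N) \<phi> * M) - ptrace_last n k (kron (1\<^sub>m N) \<phi> * B)
      = ptrace_last n k (kron (1\<^sub>m N) \<phi> * (M - B))"
  proof (rule eq_matI)
    fix a a' assume "a < dim_row (ptrace_last n k (kron (1\<^sub>m N) \<phi> * (M - B)))"
      "a' < dim_col (ptrace_last n k (kron (1\<^sub>m N) \<phi> * (M - B)))"
    hence a: "a < N" "a' < N" using NK by (auto simp: ptrace_last_def)
    have d: "dim_row (ptrace_last n k X) = N" "dim_col (ptrace_last n k X) = N" for X
      using NK by (auto simp: ptrace_last_def)
    have "(M - B) $$ (a*K+c, a'*K+b) = M $$ (a*K+c, a'*K+b) - B $$ (a*K+c, a'*K+b)" if "b < K" "c < K" for b c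
      using M BNK blk_less[OF a(1) that(2)] blk_less[OF a(2) that(1)] by simp
    thus "(ptrace_last n k (kron (1\<^sub>m N) \<phi> * M) - ptrace_last n k (kron (1\<^sub>m N) \<phi> * B)) $$ (a,a')
        = ptrace_last n k (kron (1\<^sub>m N) \<phi> * (M - B)) $$ (a,a')"
      using a d by (simp add: ptrace_entry[OF M phi NK a] ptrace_entry[OF BNK phi NK a] ptrace_entry[OF MB phi NK a]
          sum_subtractf[symmetric] right_diff_distrib)
  qed (auto simp: ptrace_last_def)
  have nrm: "spec_norm (ptrace_last n k (kron (1\<^sub>m N) \<phi> * M) - ptrace_last n k (kron (1\<^sub>m N) \<phi> * B)) \<le> \<epsilon>"
    unfolding lin using ptrace_contract[OF MB phi NK, of R m] R tr B(2) by auto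
  have "approx_deg (n - k) \<epsilon> (ptrace_last n k (kron (1\<^sub>m N) \<phi> * M))
      \<le> pauli_deg (n-k) (ptrace_last n k (kron (1\<^sub>m N) \<phi> * B))"
    unfolding approx_deg_def
    by (rule Least_le) (use nrm ptrace_dims[of n k] NK in auto)
  also have "\<dots> \<le> approx_deg n \<epsilon> M" using degB dB by simp
  finally show ?thesis unfolding N_def .
qed

end
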